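(* Let $S_1$ and $S_2$ be two XML Schemas, let $u\ge 0$ be the severity level, let $m$ be the maximum of the numbers of complex elements of $S_1$ and of $S_2$, and let $q$ be the maximum cardinality of a neighborhood $neighborhood(x,v)$, $0\le v\le u$, of an x-component $x$ of $S_1$ or $S_2$. Assuming the neighborhoods are available and each thesaurus lookup takes constant time, the values $synonymous(E_1,E_2,u)$ for all pairs of complex elements $E_1$ of $S_1$ and $E_2$ of $S_2$ (i.e. all synonymies at severity level $u$ between $S_1$ and $S_2$) can be computed in worst-case time $O((u+1)\, q^3\, m^2)$.
   Context: An x-component of an XML Schema $S$ is an element or an attribute declared in $S$; $XCompSet(S)$ is the set of x-components. A complex element is an element declared with a complex type; a simple element is one of simple type. For x-components $x_S,x_T$ of the same schema: $veryclose(x_S,x_T)$ iff $x_T=x_S$, or $x_T$ is an attribute of $x_S$, or $x_T$ is a simple sub-element of $x_S$; $close(x_S,x_T)$ iff $x_T$ is a complex sub-element of $x_S$, or $x_T$ is an element and $x_S$ has an IDREF/IDREFS attribute referring to $x_T$; $near$ is the disjunction of the two. The connection cost $CC(x_S,x_T)$ is $0$ if veryclose, $1$ if close and not veryclose, otherwise the minimum over directed paths of distinct x-components joined by $near$ pairs of the sum of pair costs ($0$ for veryclose pairs, $1$ for close pairs), and $\infty$ if no path exists. $neighborhood(x_S,j)=\{x_T\in XCompSet(S): CC(x_S,x_T)\le j\}$. Fix a thesaurus (a symmetric synonymy relation on names). For x-components $x_1$ of $S_1$, $x_2$ of $S_2$ and level $v$, $BG(v)$ is the bipartite graph with node sets $P(v)$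 (the x-components of $neighborhood(x_1,v)$) and $Q(v)$ (those of $neighborhood(x_2,v)$), with an edge between $p$ and $q$ iff their names are synonymous in the thesaurus; $A'(v)$ is a maximum matching and $\phi_{BG}(v)=\frac{2|A'(v)|}{|P(v)|+|Q(v)|}$. The neighborhoods at level $v$ are similar iff $\phi_{BG}(v)>1/2$, and $synonymous(x_1,x_2,u)$ is true iff they are similar at every level $v=0,\dots,u$. *)

theory Defs
  imports Main "HOL-Library.Extended_Nat"
begin

section \<open>XML Schemas, x-components, connection cost, neighborhoods\<close>

text \<open>An XML Schema is modelled by its finite set of x-components (type 'x), together with:
  which x-components are elements (the others are attributes), which elements are complex
  (declared with a complex type; the remaining elements are simple), the attribute relation,
  the sub-element relation, the IDREF/IDREFS reference relation, and the name of each
  x-component (names of type 'n).\<close>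

record ('x, 'n) schema =
  xcomps     :: "'x set"
  is_elem    :: "'x \<Rightarrow> bool"
  is_complex :: "'x \<Rightarrow> bool"
  attr_of    :: "'x \<Rightarrow> 'x \<Rightarrow> bool"       \<comment> \<open>attr_of S a b: b is an attribute of a\<close>
  subelem    :: "'x \<Rightarrow> 'x \<Rightarrow> bool"       \<comment> \<open>subelem S a b: b is a sub-element of a\<close>
  idref_to   :: "'x \<Rightarrow> 'x \<Rightarrow> bool"       \<comment> \<open>a has an IDREF/IDREFS attribute referring to b\<close>
  xname      :: "'x \<Rightarrow> 'n"

definition wf_schema :: "('x, 'n) schema \<Rightarrow> bool" where
  "wf_schema S \<longleftrightarrow> finite (xcomps S)
     \<and> (\<forall>a b. attr_of S a b \<longrightarrow> a \<in> xcomps S \<and> b \<in> xcomps S \<and> is_elem S a \<and> \<not> is_elem S b)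
     \<and> (\<forall>a b. subelem S a b \<longrightarrow> a \<in> xcomps S \<and> b \<in> xcomps S \<and> is_elem S a \<and> is_elem S b)
     \<and> (\<forall>a b. idref_to S a b \<longrightarrow> a \<in> xcomps S \<and> b \<in> xcomps S)"

definition complex_elems :: "('x, 'n) schema \<Rightarrow> 'x set" where
  "complex_elems S = {x \<in> xcomps S. is_elem S x \<and> is_complex S x}"

definition veryclose :: "('x, 'n) schema \<Rightarrow> 'x \<Rightarrow> 'x \<Rightarrow> bool" where
  "veryclose S a b \<longleftrightarrow> b = a \<or> attr_of S a b
      \<or> (subelem S a b \<and> is_elem S b \<and> \<not> is_complex S b)"

definition close :: "('x, 'n) schema \<Rightarrow> 'x \<Rightarrow> 'x \<Rightarrow> bool" where
  "close S a b \<longleftrightarrow> (subelem S a b \<and> is_elem S b \<and> is_complex S b)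
      \<or> (is_elem S b \<and> idref_to S a b)"

definition near :: "('x, 'n) schema \<Rightarrow> 'x \<Rightarrow> 'x \<Rightarrow> bool" where
  "near S a b \<longleftrightarrow> veryclose S a b \<or> close S a b"

definition pair_cost :: "('x, 'n) schema \<Rightarrow> 'x \<Rightarrow> 'x \<Rightarrow> nat" where
  "pair_cost S a b = (if veryclose S a b then 0 else 1)"

fun path_cost :: "('x, 'n) schema \<Rightarrow> 'x list \<Rightarrow> nat" where
  "path_cost S (a # b # rest) = pair_cost S a b + path_cost S (b # rest)"
| "path_cost S _ = 0"

definition is_path :: "('x, 'n) schema \<Rightarrow> 'x \<Rightarrow> 'x \<Rightarrow> 'x list \<Rightarrow> bool" where
  "is_path S a b xs \<longleftrightarrow> xs \<noteq> [] \<and> hd xs = a \<and> last xs = b \<and> distinct xs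
      \<and> set xs \<subseteq> xcomps S \<and> (\<forall>i. Suc i < length xs \<longrightarrow> near S (xs ! i) (xs ! Suc i))"

text \<open>Connection cost (Inf of the empty set of enat is \<infinity>).\<close>
definition CC :: "('x, 'n) schema \<Rightarrow> 'x \<Rightarrow> 'x \<Rightarrow> enat" where
  "CC S a b = (if veryclose S a b then 0
               else if close S a b then 1
               else Inf {enat (path_cost S xs) | xs. is_path S a b xs})"

definition neighborhood :: "('x, 'n) schema \<Rightarrow> 'x \<Rightarrow> nat \<Rightarrow> 'x set" where
  "neighborhood S x j = {y \<in> xcomps S. CC S x y \<le> enat j}"

section \<open>Bipartite graphs of neighborhoods, maximum matchings, synonymy\<close>

definition is_matching ::
  "('n \<Rightarrow> 'n \<Rightarrow> bool) \<Rightarrow> ('x, 'n) schema \<Rightarrow> ('y, 'n) schema \<Rightarrow> 'x set \<Rightarrow> 'y set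
     \<Rightarrow> ('x \<times> 'y) set \<Rightarrow> bool" where
  "is_matching th S1 S2 P Q M \<longleftrightarrow> M \<subseteq> P \<times> Q
     \<and> (\<forall>(p, q) \<in> M. th (xname S1 p) (xname S2 q))
     \<and> (\<forall>(p, q) \<in> M. \<forall>(p', q') \<in> M. (p = p' \<longleftrightarrow> q = q'))"

definition max_matching_size ::
  "('n \<Rightarrow> 'n \<Rightarrow> bool) \<Rightarrow> ('x, 'n) schema \<Rightarrow> ('y, 'n) schema \<Rightarrow> 'x set \<Rightarrow> 'y set \<Rightarrow> nat" where
  "max_matching_size th S1 S2 P Q = Max {card M | M. is_matching th S1 S2 P Q M}"

definition phi_BG ::
  "('n \<Rightarrow> 'n \<Rightarrow> bool) \<Rightarrow> ('x, 'n) schema \<Rightarrow> ('y, 'n) schema \<Rightarrow> 'x \<Rightarrow> 'y \<Rightarrow> nat \<Rightarrow> real" where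
  "phi_BG th S1 S2 x1 x2 v =
     (let P = neighborhood S1 x1 v; Q = neighborhood S2 x2 v
      in 2 * real (max_matching_size th S1 S2 P Q) / (real (card P) + real (card Q)))"

definition similar_at ::
  "('n \<Rightarrow> 'n \<Rightarrow> bool) \<Rightarrow> ('x, 'n) schema \<Rightarrow> ('y, 'n) schema \<Rightarrow> 'x \<Rightarrow> 'y \<Rightarrow> nat \<Rightarrow> bool" where
  "similar_at th S1 S2 x1 x2 v \<longleftrightarrow> phi_BG th S1 S2 x1 x2 v > 1 / 2"

definition synonymous ::
  "('n \<Rightarrow> 'n \<Rightarrow> bool) \<Rightarrow> ('x, 'n) schema \<Rightarrow> ('y, 'n) schema \<Rightarrow> 'x \<Rightarrow> 'y \<Rightarrow> nat \<Rightarrow> bool" where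
  "synonymous th S1 S2 x1 x2 u \<longleftrightarrow> (\<forall>v \<le> u. similar_at th S1 S2 x1 x2 v)"

section \<open>The algorithm and its cost model\<close>

text \<open>Cost model (RAM model, Functional-Data-Structures style): every function call counts one
  step, every thesaurus lookup counts one step, the precomputed neighborhoods (given as lists
  nb1 x v, nb2 x v) are accessed in one step, and the arrays indexed by x-components used by the
  algorithm (adjacency lists, mate array, visited array; modelled as HOL functions) are read and
  updated in one step; initialising / resetting such an array for the |Q| right nodes costs |Q|.
  Each function f below is paired with a hand-written step-counting function T_f mirroring it.\<close>

text \<open>Adjacency lists of the bipartite graph: for p, the nodes q of Q with synonymous names.
  Building them for all p in P costs |P| (|Q| + 2) + 1 steps (|Q| thesaurus lookups per p).\<close>
definition adj_of :: "('n \<Rightarrow> 'n \<Rightarrow> bool) \<Rightarrow> ('x \<Rightarrow> 'n) \<Rightarrow> ('y \<Rightarrow> 'n) \<Rightarrow> 'y list \<Rightarrow> 'x \<Rightarrow> 'y list" where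
  "adj_of th n1 n2 Q p = filter (\<lambda>q. th (n1 p) (n2 q)) Q"

fun T_build_adj :: "'x list \<Rightarrow> 'y list \<Rightarrow> nat" where
  "T_build_adj [] Q = 1"
| "T_build_adj (p # ps) Q = length Q + 2 + T_build_adj ps Q"

text \<open>Kuhn's augmenting-path search from the left node p, scanning the candidate list qs;
  mt is the mate array of the right nodes, vs the visited array; the first argument is fuel.\<close>
fun aug :: "nat \<Rightarrow> ('x \<Rightarrow> 'y list) \<Rightarrow> ('y \<Rightarrow> 'x option) \<Rightarrow> ('y \<Rightarrow> bool) \<Rightarrow> 'x \<Rightarrow> 'y list
              \<Rightarrow> bool \<times> ('y \<Rightarrow> 'x option) \<times> ('y \<Rightarrow> bool)" where
  "aug 0 adj mt vs p qs = (False, mt, vs)"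
| "aug (Suc n) adj mt vs p [] = (False, mt, vs)"
| "aug (Suc n) adj mt vs p (q # qs) =
     (if vs q then aug (Suc n) adj mt vs p qs
      else (case mt q of
              None \<Rightarrow> (True, mt(q := Some p), vs(q := True))
            | Some p' \<Rightarrow>
                (case aug n adj mt (vs(q := True)) p' (adj p') of
                   (True, mt', vs') \<Rightarrow> (True, mt'(q := Some p), vs')
                 | (False, mt', vs') \<Rightarrow> aug (Suc n) adj mt' vs' p qs)))"

fun T_aug :: "nat \<Rightarrow> ('x \<Rightarrow> 'y list) \<Rightarrow> ('y \<Rightarrow> 'x option) \<Rightarrow> ('y \<Rightarrow> bool) \<Rightarrow> 'x \<Rightarrow> 'y list \<Rightarrow> nat" where
  "T_aug 0 adj mt vs p qs = 1"
| "T_aug (Suc n) adj mt vs p [] = 1"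
| "T_aug (Suc n) adj mt vs p (q # qs) =
     1 + (if vs q then T_aug (Suc n) adj mt vs p qs
          else (case mt q of
                  None \<Rightarrow> 1
                | Some p' \<Rightarrow>
                    T_aug n adj mt (vs(q := True)) p' (adj p') +
                    (case aug n adj mt (vs(q := True)) p' (adj p') of
                       (True, mt', vs') \<Rightarrow> 1
                     | (False, mt', vs') \<Rightarrow> T_aug (Suc n) adj mt' vs' p qs)))"

text \<open>One phase per left node; the visited array is reset (cost |Q|) at each phase.\<close>
fun kuhn :: "('x \<Rightarrow> 'y list) \<Rightarrow> 'y list \<Rightarrow> ('y \<Rightarrow> 'x option) \<Rightarrow> 'x list \<Rightarrow> ('y \<Rightarrow> 'x option)" where
  "kuhn adj Q mt [] = mt"
| "kuhn adj Q mt (p # ps) =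
     kuhn adj Q (fst (snd (aug (Suc (length Q)) adj mt (\<lambda>_. False) p (adj p)))) ps"

fun T_kuhn :: "('x \<Rightarrow> 'y list) \<Rightarrow> 'y list \<Rightarrow> ('y \<Rightarrow> 'x option) \<Rightarrow> 'x list \<Rightarrow> nat" where
  "T_kuhn adj Q mt [] = 1"
| "T_kuhn adj Q mt (p # ps) =
     1 + length Q + T_aug (Suc (length Q)) adj mt (\<lambda>_. False) p (adj p)
       + T_kuhn adj Q (fst (snd (aug (Suc (length Q)) adj mt (\<lambda>_. False) p (adj p)))) ps"

definition matching_size_alg ::
  "('n \<Rightarrow> 'n \<Rightarrow> bool) \<Rightarrow> ('x \<Rightarrow> 'n) \<Rightarrow> ('y \<Rightarrow> 'n) \<Rightarrow> 'x list \<Rightarrow> 'y list \<Rightarrow> nat" where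
  "matching_size_alg th n1 n2 P Q =
     (let adj = adj_of th n1 n2 Q;
          mt = kuhn adj Q (\<lambda>_. None) P
      in length (filter (\<lambda>q. mt q \<noteq> None) Q))"

definition T_matching_size_alg ::
  "('n \<Rightarrow> 'n \<Rightarrow> bool) \<Rightarrow> ('x \<Rightarrow> 'n) \<Rightarrow> ('y \<Rightarrow> 'n) \<Rightarrow> 'x list \<Rightarrow> 'y list \<Rightarrow> nat" where
  "T_matching_size_alg th n1 n2 P Q =
     (let adj = adj_of th n1 n2 Q
      in 1 + T_build_adj P Q + (length Q + 1) + T_kuhn adj Q (\<lambda>_. None) P + (length Q + 1))"

text \<open>Similarity test at one level: 2|A'|/(|P|+|Q|) > 1/2, i.e. 4|A'| > |P| + |Q|.\<close>
definition similar_alg ::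
  "('n \<Rightarrow> 'n \<Rightarrow> bool) \<Rightarrow> ('x \<Rightarrow> 'n) \<Rightarrow> ('y \<Rightarrow> 'n) \<Rightarrow> 'x list \<Rightarrow> 'y list \<Rightarrow> bool" where
  "similar_alg th n1 n2 P Q \<longleftrightarrow> length P + length Q < 4 * matching_size_alg th n1 n2 P Q"

definition T_similar_alg ::
  "('n \<Rightarrow> 'n \<Rightarrow> bool) \<Rightarrow> ('x \<Rightarrow> 'n) \<Rightarrow> ('y \<Rightarrow> 'n) \<Rightarrow> 'x list \<Rightarrow> 'y list \<Rightarrow> nat" where
  "T_similar_alg th n1 n2 P Q = 3 + length P + length Q + T_matching_size_alg th n1 n2 P Q"

fun syn_upto_alg ::
  "('n \<Rightarrow> 'n \<Rightarrow> bool) \<Rightarrow> ('x \<Rightarrow> 'n) \<Rightarrow> ('y \<Rightarrow> 'n) \<Rightarrow> ('x \<Rightarrow> nat \<Rightarrow> 'x list) \<Rightarrow> ('y \<Rightarrow> nat \<Rightarrow> 'y list)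
     \<Rightarrow> 'x \<Rightarrow> 'y \<Rightarrow> nat \<Rightarrow> bool" where
  "syn_upto_alg th n1 n2 nb1 nb2 e1 e2 0 = similar_alg th n1 n2 (nb1 e1 0) (nb2 e2 0)"
| "syn_upto_alg th n1 n2 nb1 nb2 e1 e2 (Suc v) =
     (syn_upto_alg th n1 n2 nb1 nb2 e1 e2 v \<and> similar_alg th n1 n2 (nb1 e1 (Suc v)) (nb2 e2 (Suc v)))"

fun T_syn_upto_alg ::
  "('n \<Rightarrow> 'n \<Rightarrow> bool) \<Rightarrow> ('x \<Rightarrow> 'n) \<Rightarrow> ('y \<Rightarrow> 'n) \<Rightarrow> ('x \<Rightarrow> nat \<Rightarrow> 'x list) \<Rightarrow> ('y \<Rightarrow> nat \<Rightarrow> 'y list)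
     \<Rightarrow> 'x \<Rightarrow> 'y \<Rightarrow> nat \<Rightarrow> nat" where
  "T_syn_upto_alg th n1 n2 nb1 nb2 e1 e2 0 = 3 + T_similar_alg th n1 n2 (nb1 e1 0) (nb2 e2 0)"
| "T_syn_upto_alg th n1 n2 nb1 nb2 e1 e2 (Suc v) =
     3 + T_syn_upto_alg th n1 n2 nb1 nb2 e1 e2 v
       + T_similar_alg th n1 n2 (nb1 e1 (Suc v)) (nb2 e2 (Suc v))"

fun syn_row_alg ::
  "('n \<Rightarrow> 'n \<Rightarrow> bool) \<Rightarrow> ('x \<Rightarrow> 'n) \<Rightarrow> ('y \<Rightarrow> 'n) \<Rightarrow> ('x \<Rightarrow> nat \<Rightarrow> 'x list) \<Rightarrow> ('y \<Rightarrow> nat \<Rightarrow> 'y list)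
     \<Rightarrow> nat \<Rightarrow> 'x \<Rightarrow> 'y list \<Rightarrow> (('x \<times> 'y) \<times> bool) list" where
  "syn_row_alg th n1 n2 nb1 nb2 u e1 [] = []"
| "syn_row_alg th n1 n2 nb1 nb2 u e1 (e2 # es) =
     ((e1, e2), syn_upto_alg th n1 n2 nb1 nb2 e1 e2 u) # syn_row_alg th n1 n2 nb1 nb2 u e1 es"

fun T_syn_row_alg ::
  "('n \<Rightarrow> 'n \<Rightarrow> bool) \<Rightarrow> ('x \<Rightarrow> 'n) \<Rightarrow> ('y \<Rightarrow> 'n) \<Rightarrow> ('x \<Rightarrow> nat \<Rightarrow> 'x list) \<Rightarrow> ('y \<Rightarrow> nat \<Rightarrow> 'y list)
     \<Rightarrow> nat \<Rightarrow> 'x \<Rightarrow> 'y list \<Rightarrow> nat" where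
  "T_syn_row_alg th n1 n2 nb1 nb2 u e1 [] = 1"
| "T_syn_row_alg th n1 n2 nb1 nb2 u e1 (e2 # es) =
     1 + T_syn_upto_alg th n1 n2 nb1 nb2 e1 e2 u + T_syn_row_alg th n1 n2 nb1 nb2 u e1 es"

fun all_syn_alg ::
  "('n \<Rightarrow> 'n \<Rightarrow> bool) \<Rightarrow> ('x \<Rightarrow> 'n) \<Rightarrow> ('y \<Rightarrow> 'n) \<Rightarrow> ('x \<Rightarrow> nat \<Rightarrow> 'x list) \<Rightarrow> ('y \<Rightarrow> nat \<Rightarrow> 'y list)
     \<Rightarrow> nat \<Rightarrow> 'x list \<Rightarrow> 'y list \<Rightarrow> (('x \<times> 'y) \<times> bool) list" where
  "all_syn_alg th n1 n2 nb1 nb2 u [] cs2 = []"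
| "all_syn_alg th n1 n2 nb1 nb2 u (e1 # es) cs2 =
     syn_row_alg th n1 n2 nb1 nb2 u e1 cs2 @ all_syn_alg th n1 n2 nb1 nb2 u es cs2"

text \<open>Appending a row of length |cs2| costs |cs2| + 1.\<close>
fun T_all_syn_alg ::
  "('n \<Rightarrow> 'n \<Rightarrow> bool) \<Rightarrow> ('x \<Rightarrow> 'n) \<Rightarrow> ('y \<Rightarrow> 'n) \<Rightarrow> ('x \<Rightarrow> nat \<Rightarrow> 'x list) \<Rightarrow> ('y \<Rightarrow> nat \<Rightarrow> 'y list)
     \<Rightarrow> nat \<Rightarrow> 'x list \<Rightarrow> 'y list \<Rightarrow> nat" where
  "T_all_syn_alg th n1 n2 nb1 nb2 u [] cs2 = 1"
| "T_all_syn_alg th n1 n2 nb1 nb2 u (e1 # es) cs2 =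
     1 + T_syn_row_alg th n1 n2 nb1 nb2 u e1 cs2 + (length cs2 + 1)
       + T_all_syn_alg th n1 n2 nb1 nb2 u es cs2"

definition max_complex :: "('x, 'n) schema \<Rightarrow> ('y, 'n) schema \<Rightarrow> nat" where
  "max_complex S1 S2 = max (card (complex_elems S1)) (card (complex_elems S2))"

definition max_nbhd :: "('x, 'n) schema \<Rightarrow> ('y, 'n) schema \<Rightarrow> nat \<Rightarrow> nat" where
  "max_nbhd S1 S2 u = Max (insert 0
      ({card (neighborhood S1 x v) | x v. x \<in> xcomps S1 \<and> v \<le> u}
     \<union> {card (neighborhood S2 y v) | y v. y \<in> xcomps S2 \<and> v \<le> u}))"

end

theory Submission
  imports Defs
begin

definition unv :: "'y list \<Rightarrow> ('y \<Rightarrow> bool) \<Rightarrow> nat" where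
  "unv Q vs = card {q \<in> set Q. \<not> vs q}"

lemma unv_upd: "q \<in> set Q \<Longrightarrow> \<not> vs q \<Longrightarrow> Suc (unv Q (vs(q:=True))) = unv Q vs"
proof -
  assume a: "q \<in> set Q" "\<not> vs q"
  have "{q' \<in> set Q. \<not> (vs(q:=True)) q'} = {q' \<in> set Q. \<not> vs q'} - {q}" by auto
  moreover have "q \<in> {q' \<in> set Q. \<not> vs q'}" using a by auto
  moreover have "finite {q' \<in> set Q. \<not> vs q'}" by auto
  ultimately show ?thesis unfolding unv_def
    by (metis (no_types, lifting) card_Diff1_less card_Suc_Diff1)
qed

lemma unv_mono: "\<forall>q. vs q \<longrightarrow> vs' q \<Longrightarrow> unv Q vs' \<le> unv Q vs"
  unfolding unv_def by (rule card_mono) auto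

lemma aug_fail_basic:
  "aug n adj mt vs p qs = (False, mt', vs') \<Longrightarrow> mt' = mt \<and> (\<forall>q. vs q \<longrightarrow> vs' q)"
proof (induction n adj mt vs p qs arbitrary: mt' vs' rule: aug.induct)
  case (1 adj mt vs p qs) thus ?case by simp
next
  case (2 n adj mt vs p) thus ?case by simp
next
  case (3 n adj mt vs p q qs)
  show ?case
  proof (cases "vs q")
    case True thus ?thesis using 3 by simp
  next
    case False
    show ?thesis
    proof (cases "mt q")
      case None thus ?thesis using 3(4) False by simp
    next
      case (Some p')
      obtain b m1 v1 where A: "aug n adj mt (vs(q:=True)) p' (adj p') = (b, m1, v1)"
        by (cases "aug n adj mt (vs(q:=True)) p' (adj p')") auto
      show ?thesis
      proof (cases b)
        case True thus ?thesis using 3(4) False Some A by simp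
      next
        case b: False
        have r: "aug (Suc n) adj m1 v1 p qs = (False, mt', vs')" using 3(4) False Some A b by simp
        have A': "aug n adj mt (vs(q:=True)) p' (adj p') = (False, m1, v1)" using A b by simp
        have i1: "m1 = mt \<and> (\<forall>q'. (vs(q:=True)) q' \<longrightarrow> v1 q')"
          using 3(2)[OF False Some A'] .
        have bF: "b = False" using b by simp
        have i2: "mt' = m1 \<and> (\<forall>q'. v1 q' \<longrightarrow> vs' q')"
          using 3(3)[OF False Some A[symmetric] bF refl r] .
        show ?thesis using i1 i2 by auto
      qed
    qed
  qed
qed

lemma aug_fail:
  "aug n adj mt vs p qs = (False, mt', vs') \<Longrightarrow> (\<forall>x. set (adj x) \<subseteq> set Q) \<Longrightarrow> set qs \<subseteq> set Q
   \<Longrightarrow> unv Q vs < n \<Longrightarrow>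
   (\<forall>q\<in>set qs. vs' q) \<and> (\<forall>q. vs' q \<and> \<not> vs q \<longrightarrow> (\<exists>x. mt q = Some x \<and> (\<forall>q'\<in>set (adj x). vs' q')))"
proof (induction n adj mt vs p qs arbitrary: mt' vs' rule: aug.induct)
  case (1 adj mt vs p qs) thus ?case by simp
next
  case (2 n adj mt vs p) thus ?case by simp
next
  case (3 n adj mt vs p q qs)
  have qQ: "q \<in> set Q" using 3(6) by simp
  show ?case
  proof (cases "vs q")
    case True
    have r: "aug (Suc n) adj mt vs p qs = (False, mt', vs')" using 3(4) True by simp
    have "(\<forall>q\<in>set qs. vs' q) \<and> (\<forall>q. vs' q \<and> \<not> vs q \<longrightarrow> (\<exists>x. mt q = Some x \<and> (\<forall>q'\<in>set (adj x). vs' q')))"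
      using 3(1)[OF True r 3(5)] 3(6,7) by simp
    moreover have "vs' q" using aug_fail_basic[OF r] True by simp
    ultimately show ?thesis by simp
  next
    case False
    show ?thesis
    proof (cases "mt q")
      case None thus ?thesis using 3(4) False by simp
    next
      case (Some p')
      obtain b m1 v1 where A: "aug n adj mt (vs(q:=True)) p' (adj p') = (b, m1, v1)"
        by (cases "aug n adj mt (vs(q:=True)) p' (adj p')") auto
      show ?thesis
      proof (cases b)
        case True thus ?thesis using 3(4) False Some A by simp
      next
        case b: False
        have r: "aug (Suc n) adj m1 v1 p qs = (False, mt', vs')" using 3(4) False Some A b by simp
        have A': "aug n adj mt (vs(q:=True)) p' (adj p') = (False, m1, v1)" using A b by simp
        have b1: "m1 = mt \<and> (\<forall>q'. (vs(q:=True)) q' \<longrightarrow> v1 q')" using aug_fail_basic[OF A'] .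
        have b2: "mt' = m1 \<and> (\<forall>q'. v1 q' \<longrightarrow> vs' q')" using aug_fail_basic[OF r] .
        have f1: "unv Q (vs(q:=True)) < n" using unv_upd[of q Q vs, OF qQ False] 3(7) by simp
        have i1: "(\<forall>q\<in>set (adj p'). v1 q) \<and> (\<forall>q'. v1 q' \<and> \<not> (vs(q:=True)) q' \<longrightarrow> (\<exists>x. mt q' = Some x \<and> (\<forall>q''\<in>set (adj x). v1 q'')))"
          using 3(2)[OF False Some A' 3(5) _ f1] 3(5) by blast
        have f2: "unv Q v1 < Suc n" using unv_mono[of "vs(q:=True)" v1 Q] b1 f1 by simp
        have bF: "b = False" using b by simp
        have i2: "(\<forall>q\<in>set qs. vs' q) \<and> (\<forall>q'. vs' q' \<and> \<not> v1 q' \<longrightarrow> (\<exists>x. m1 q' = Some x \<and> (\<forall>q''\<in>set (adj x). vs' q'')))"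
          using 3(3)[OF False Some A[symmetric] bF refl r 3(5) _ f2] 3(6) by simp
        show ?thesis
        proof (intro conjI allI impI ballI)
          fix q0 assume "q0 \<in> set (q # qs)"
          thus "vs' q0" using i2 b1 b2 by auto
        next
          fix q0 assume h: "vs' q0 \<and> \<not> vs q0"
          show "\<exists>x. mt q0 = Some x \<and> (\<forall>q'\<in>set (adj x). vs' q')"
          proof (cases "v1 q0")
            case True
            show ?thesis
            proof (cases "q0 = q")
              case True thus ?thesis using Some i1 b2 by auto
            next
              case False
              thus ?thesis using i1 b2 h \<open>v1 q0\<close> by fastforce
            qed
          next
            case False thus ?thesis using i2 b1 h by auto
          qed
        qed
      qed
    qed
  qed
qed

definition inj_mt :: "('y \<Rightarrow> 'x option) \<Rightarrow> bool" where
  "inj_mt mt \<longleftrightarrow> (\<forall>q1 q2 x. mt q1 = Some x \<longrightarrow> mt q2 = Some x \<longrightarrow> q1 = q2)"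
definition valid :: "('x \<Rightarrow> 'y list) \<Rightarrow> ('y \<Rightarrow> 'x option) \<Rightarrow> bool" where
  "valid adj mt \<longleftrightarrow> (\<forall>q x. mt q = Some x \<longrightarrow> q \<in> set (adj x))"
definition cnt :: "'y list \<Rightarrow> ('y \<Rightarrow> 'x option) \<Rightarrow> nat" where
  "cnt Q mt = card {q \<in> set Q. mt q \<noteq> None}"

lemma aug_succ:
  "aug n adj mt vs p qs = (True, mt', vs') \<Longrightarrow> (\<forall>x. set (adj x) \<subseteq> set Q) \<Longrightarrow> inj_mt mt
   \<Longrightarrow> valid adj mt \<Longrightarrow> set qs \<subseteq> set (adj p) \<Longrightarrow> (\<forall>q. mt q = Some p \<longrightarrow> vs q) \<Longrightarrow>
   (\<forall>q. vs q \<longrightarrow> mt' q = mt q) \<and> valid adj mt'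
   \<and> (\<forall>q1 q2 x. mt' q1 = Some x \<longrightarrow> mt' q2 = Some x \<longrightarrow> mt q1 \<noteq> Some p \<longrightarrow> mt q2 \<noteq> Some p \<longrightarrow> q1 = q2)
   \<and> cnt Q mt' = Suc (cnt Q mt)
   \<and> (\<forall>q x. mt' q = Some x \<longrightarrow> mt q \<noteq> Some p \<longrightarrow> x = p \<or> (\<exists>q2. mt q2 = Some x \<and> x \<noteq> p))"
proof (induction n adj mt vs p qs arbitrary: mt' vs' rule: aug.induct)
  case (1 adj mt vs p qs) thus ?case by simp
next
  case (2 n adj mt vs p) thus ?case by simp
next
  case (3 n adj mt vs p q qs)
  have qadj: "q \<in> set (adj p)" using 3(8) by simp
  have qQ: "q \<in> set Q" using qadj 3(5) by auto
  have inj: "\<And>q1 q2 x. mt q1 = Some x \<Longrightarrow> mt q2 = Some x \<Longrightarrow> q1 = q2" using 3(6) unfolding inj_mt_def by blast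
  show ?case
  proof (cases "vs q")
    case True
    have r: "aug (Suc n) adj mt vs p qs = (True, mt', vs')" using 3(4) True by simp
    show ?thesis using 3(1)[OF True r 3(5,6,7) _ 3(9)] 3(8) by simp
  next
    case False
    have qnO: "mt q \<noteq> Some p" using False 3(9) by auto
    show ?thesis
    proof (cases "mt q")
      case None
      have mt': "mt' = mt(q := Some p)" using 3(4) False None by simp
      have c: "{q0 \<in> set Q. mt' q0 \<noteq> None} = insert q {q0 \<in> set Q. mt q0 \<noteq> None}"
        using qQ mt' by auto
      have c2: "q \<notin> {q0 \<in> set Q. mt q0 \<noteq> None}" using None by simp
      have "cnt Q mt' = Suc (cnt Q mt)" unfolding cnt_def c using c2 by simp
      moreover have "valid adj mt'" using 3(7) qadj mt' unfolding valid_def by auto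
      moreover have "\<forall>q0. vs q0 \<longrightarrow> mt' q0 = mt q0" using mt' False by auto
      moreover have "\<forall>q1 q2 x. mt' q1 = Some x \<longrightarrow> mt' q2 = Some x \<longrightarrow> mt q1 \<noteq> Some p \<longrightarrow> mt q2 \<noteq> Some p \<longrightarrow> q1 = q2"
        using mt' inj by (auto split: if_splits)
      moreover have "\<forall>q0 x. mt' q0 = Some x \<longrightarrow> mt q0 \<noteq> Some p \<longrightarrow> x = p \<or> (\<exists>q2. mt q2 = Some x \<and> x \<noteq> p)"
        using mt' by auto
      ultimately show ?thesis by blast
    next
      case (Some p')
      have pp: "p' \<noteq> p" using Some qnO by auto
      obtain b m1 v1 where A: "aug n adj mt (vs(q:=True)) p' (adj p') = (b, m1, v1)"
        by (cases "aug n adj mt (vs(q:=True)) p' (adj p')") auto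
      show ?thesis
      proof (cases b)
        case True
        have A': "aug n adj mt (vs(q:=True)) p' (adj p') = (True, m1, v1)" using A True by simp
        have mt': "mt' = m1(q := Some p)" using 3(4) False Some A True by simp
        have pre: "\<forall>q'. mt q' = Some p' \<longrightarrow> (vs(q:=True)) q'" using inj Some by auto
        have I: "(\<forall>q0. (vs(q:=True)) q0 \<longrightarrow> m1 q0 = mt q0) \<and> valid adj m1
           \<and> (\<forall>q1 q2 x. m1 q1 = Some x \<longrightarrow> m1 q2 = Some x \<longrightarrow> mt q1 \<noteq> Some p' \<longrightarrow> mt q2 \<noteq> Some p' \<longrightarrow> q1 = q2)
           \<and> cnt Q m1 = Suc (cnt Q mt)
           \<and> (\<forall>q0 x. m1 q0 = Some x \<longrightarrow> mt q0 \<noteq> Some p' \<longrightarrow> x = p' \<or> (\<exists>q2. mt q2 = Some x \<and> x \<noteq> p'))"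
          using 3(2)[OF False Some A' 3(5,6,7) subset_refl pre] .
        have P1: "\<And>q0. (vs(q:=True)) q0 \<Longrightarrow> m1 q0 = mt q0" using I by blast
        have P3: "\<And>q1 q2 x. m1 q1 = Some x \<Longrightarrow> m1 q2 = Some x \<Longrightarrow> mt q1 \<noteq> Some p' \<Longrightarrow> mt q2 \<noteq> Some p' \<Longrightarrow> q1 = q2"
          using I by blast
        have P6: "\<And>q0 x. m1 q0 = Some x \<Longrightarrow> mt q0 \<noteq> Some p' \<Longrightarrow> x = p' \<or> (\<exists>q2. mt q2 = Some x \<and> x \<noteq> p')"
          using I by blast
        have m1q: "m1 q = Some p'" using P1[of q] Some by simp
        have np': "\<And>q0. q0 \<noteq> q \<Longrightarrow> mt q0 \<noteq> Some p'" using inj Some by blast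
        have G1: "\<forall>q0. vs q0 \<longrightarrow> mt' q0 = mt q0" using mt' P1 False by auto
        have P2: "valid adj m1" using I by blast
        have P4: "cnt Q m1 = Suc (cnt Q mt)" using I by blast
        have G2: "valid adj mt'" using P2 qadj mt' unfolding valid_def by auto
        have c: "{q0 \<in> set Q. mt' q0 \<noteq> None} = {q0 \<in> set Q. m1 q0 \<noteq> None}" using mt' m1q by auto
        have G4: "cnt Q mt' = Suc (cnt Q mt)" using P4 c unfolding cnt_def by simp
        have key: "\<And>q2. q2 \<noteq> q \<Longrightarrow> m1 q2 = Some p \<Longrightarrow> mt q2 \<noteq> Some p \<Longrightarrow> False"
        proof -
          fix q2 assume a: "q2 \<noteq> q" "m1 q2 = Some p" "mt q2 \<noteq> Some p"
          have "p = p' \<or> (\<exists>q3. mt q3 = Some p \<and> p \<noteq> p')" using P6[OF a(2) np'[OF a(1)]] .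
          then obtain q3 where q3: "mt q3 = Some p" using pp by auto
          have "vs q3" using q3 3(9) by auto
          hence "m1 q3 = Some p" using P1[of q3] q3 by simp
          hence "q2 = q3" using P3[OF a(2)] np'[OF a(1)] q3 pp by auto
          thus False using a q3 by simp
        qed
        have G3: "\<forall>q1 q2 x. mt' q1 = Some x \<longrightarrow> mt' q2 = Some x \<longrightarrow> mt q1 \<noteq> Some p \<longrightarrow> mt q2 \<noteq> Some p \<longrightarrow> q1 = q2"
        proof (intro allI impI)
          fix q1 q2 x assume h: "mt' q1 = Some x" "mt' q2 = Some x" "mt q1 \<noteq> Some p" "mt q2 \<noteq> Some p"
          show "q1 = q2"
          proof (cases "q1 = q")
            case True
            thus ?thesis using h key[of q2] mt' by (cases "q2 = q") auto
          next
            case False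
            show ?thesis
            proof (cases "q2 = q")
              case True thus ?thesis using h key[of q1] mt' False by auto
            next
              case F2: False
              thus ?thesis using h mt' False P3[of q1 x q2] np' by auto
            qed
          qed
        qed
        have G5: "\<forall>q0 x. mt' q0 = Some x \<longrightarrow> mt q0 \<noteq> Some p \<longrightarrow> x = p \<or> (\<exists>q2. mt q2 = Some x \<and> x \<noteq> p)"
        proof (intro allI impI)
          fix q0 x assume h: "mt' q0 = Some x" "mt q0 \<noteq> Some p"
          show "x = p \<or> (\<exists>q2. mt q2 = Some x \<and> x \<noteq> p)"
          proof (cases "q0 = q")
            case True thus ?thesis using h mt' by simp
          next
            case False
            hence "m1 q0 = Some x" using h mt' by simp
            hence "x = p' \<or> (\<exists>q2. mt q2 = Some x \<and> x \<noteq> p')" using P6 np'[OF False] by blast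
            thus ?thesis using Some pp by blast
          qed
        qed
        show ?thesis using G1 G2 G3 G4 G5 by blast
      next
        case b: False
        have r: "aug (Suc n) adj m1 v1 p qs = (True, mt', vs')" using 3(4) False Some A b by simp
        have A': "aug n adj mt (vs(q:=True)) p' (adj p') = (False, m1, v1)" using A b by simp
        have b1: "m1 = mt \<and> (\<forall>q'. (vs(q:=True)) q' \<longrightarrow> v1 q')" using aug_fail_basic[OF A'] .
        have bF: "b = False" using b by simp
        have m1eq: "m1 = mt" using b1 by simp
        have pre: "\<forall>q0. m1 q0 = Some p \<longrightarrow> v1 q0" using b1 3(9) by auto
        have im: "inj_mt m1" "valid adj m1" using m1eq 3(6,7) by simp_all
        have R: "(\<forall>q0. v1 q0 \<longrightarrow> mt' q0 = m1 q0) \<and> valid adj mt'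
           \<and> (\<forall>q1 q2 x. mt' q1 = Some x \<longrightarrow> mt' q2 = Some x \<longrightarrow> m1 q1 \<noteq> Some p \<longrightarrow> m1 q2 \<noteq> Some p \<longrightarrow> q1 = q2)
           \<and> cnt Q mt' = Suc (cnt Q m1)
           \<and> (\<forall>q0 x. mt' q0 = Some x \<longrightarrow> m1 q0 \<noteq> Some p \<longrightarrow> x = p \<or> (\<exists>q2. m1 q2 = Some x \<and> x \<noteq> p))"
          using 3(3)[OF False Some A[symmetric] bF refl r 3(5) im _ pre] 3(8) by simp
        have v: "\<forall>q0. vs q0 \<longrightarrow> v1 q0" using b1 by simp
        show ?thesis using R v unfolding m1eq by blast
      qed
    qed
  qed
qed

lemma T_aug_bound:
  "(\<forall>x. set (adj x) \<subseteq> set Q \<and> length (adj x) \<le> L) \<Longrightarrow> set qs \<subseteq> set Q \<Longrightarrow>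
   T_aug n adj mt vs p qs + (L+2) * unv Q (snd (snd (aug n adj mt vs p qs)))
     \<le> (L+2) * unv Q vs + length qs + 1"
proof (induction n adj mt vs p qs rule: aug.induct)
  case (1 adj mt vs p qs) thus ?case by simp
next
  case (2 n adj mt vs p) thus ?case by simp
next
  case (3 n adj mt vs p q qs)
  have qQ: "q \<in> set Q" using 3(5) by simp
  show ?case
  proof (cases "vs q")
    case True
    thus ?thesis using 3(1)[OF True 3(4)] 3(5) by simp
  next
    case False
    have u: "(L+2) * unv Q vs = (L+2) * unv Q (vs(q:=True)) + L + 2"
      using unv_upd[of q Q vs, OF qQ False] by (metis add.commute add.left_commute mult_Suc_right)
    show ?thesis
    proof (cases "mt q")
      case None
      have e1: "T_aug (Suc n) adj mt vs p (q#qs) = 2" using False None by simp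
      have e2: "snd (snd (aug (Suc n) adj mt vs p (q#qs))) = vs(q:=True)" using False None by simp
      show ?thesis unfolding e1 e2 using u by linarith
    next
      case (Some p')
      obtain b m1 v1 where A: "aug n adj mt (vs(q:=True)) p' (adj p') = (b, m1, v1)"
        by (cases "aug n adj mt (vs(q:=True)) p' (adj p')") auto
      have aQ: "set (adj p') \<subseteq> set Q" "length (adj p') \<le> L" using 3(4) by auto
      have sv: "snd(snd(aug n adj mt (vs(q:=True)) p' (adj p'))) = v1" using A by simp
      have I1: "T_aug n adj mt (vs(q:=True)) p' (adj p') + (L+2) * unv Q v1 \<le> (L+2) * unv Q (vs(q:=True)) + length (adj p') + 1"
        using 3(2)[OF False Some 3(4) aQ(1)] unfolding sv .
      show ?thesis
      proof (cases b)
        case True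
        have e1: "T_aug (Suc n) adj mt vs p (q#qs) = 1 + T_aug n adj mt (vs(q:=True)) p' (adj p') + 1"
          using False Some A True by simp
        have e2: "snd (snd (aug (Suc n) adj mt vs p (q#qs))) = v1" using False Some A True by simp
        show ?thesis unfolding e1 e2 using I1 u aQ(2) by simp
      next
        case b: False
        have bF: "b = False" using b by simp
        have I2: "T_aug (Suc n) adj m1 v1 p qs + (L+2) * unv Q (snd (snd (aug (Suc n) adj m1 v1 p qs))) \<le> (L+2) * unv Q v1 + length qs + 1"
          using 3(3)[OF False Some A[symmetric] bF refl 3(4)] 3(5) by simp
        have e1: "T_aug (Suc n) adj mt vs p (q#qs) = 1 + T_aug n adj mt (vs(q:=True)) p' (adj p') + T_aug (Suc n) adj m1 v1 p qs"
          using False Some A b by simp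
        have e2: "snd (snd (aug (Suc n) adj mt vs p (q#qs))) = snd (snd (aug (Suc n) adj m1 v1 p qs))" using False Some A b by simp
        show ?thesis unfolding e1 e2 using I1 I2 u aQ(2) by simp
      qed
    qed
  qed
qed

definition mm :: "('x \<Rightarrow> 'y \<Rightarrow> bool) \<Rightarrow> 'x set \<Rightarrow> 'y set \<Rightarrow> ('x \<times> 'y) set \<Rightarrow> bool" where
  "mm E A B M \<longleftrightarrow> M \<subseteq> A \<times> B \<and> (\<forall>(p, q) \<in> M. E p q)
     \<and> (\<forall>(p, q) \<in> M. \<forall>(p', q') \<in> M. (p = p' \<longleftrightarrow> q = q'))"

definition mms :: "('x \<Rightarrow> 'y \<Rightarrow> bool) \<Rightarrow> 'x set \<Rightarrow> 'y set \<Rightarrow> nat" where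
  "mms E A B = Max {card M | M. mm E A B M}"

lemma mm_inj_snd: "mm E A B M \<Longrightarrow> inj_on snd M"
  unfolding mm_def inj_on_def by fastforce

lemma mm_inj_fst: "mm E A B M \<Longrightarrow> inj_on fst M"
  unfolding mm_def inj_on_def by fastforce

lemma mm_card_le: "finite A \<Longrightarrow> finite B \<Longrightarrow> mm E A B M \<Longrightarrow> card M \<le> card B"
proof -
  assume a: "finite A" "finite B" "mm E A B M"
  have "card M = card (snd ` M)" using card_image[OF mm_inj_snd[OF a(3)]] by simp
  also have "\<dots> \<le> card B" using a unfolding mm_def by (intro card_mono) auto
  finally show ?thesis .
qed

lemma mms_fin: "finite A \<Longrightarrow> finite B \<Longrightarrow> finite {card M | M. mm E A B M} \<and> {card M | M. mm E A B M} \<noteq> {}"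
proof -
  assume a: "finite A" "finite B"
  have "{card M | M. mm E A B M} \<subseteq> {..card B}" using mm_card_le[OF a] by auto
  moreover have "mm E A B {}" unfolding mm_def by simp
  ultimately show ?thesis using finite_subset by blast
qed

lemma mms_ge: "finite A \<Longrightarrow> finite B \<Longrightarrow> mm E A B M \<Longrightarrow> card M \<le> mms E A B"
  unfolding mms_def using mms_fin by (intro Max_ge) auto

lemma mms_obtain: "finite A \<Longrightarrow> finite B \<Longrightarrow> \<exists>M. mm E A B M \<and> card M = mms E A B"
proof -
  assume a: "finite A" "finite B"
  have "mms E A B \<in> {card M | M. mm E A B M}" unfolding mms_def using mms_fin[OF a] by (intro Max_in) auto
  thus ?thesis by auto
qed

lemma mms_empty: "mms E {} B = 0"
proof -
  have "{card M | M. mm E {} B M} = {0}"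
  proof
    show "{card M | M. mm E {} B M} \<subseteq> {0}" unfolding mm_def by auto
    have "mm E {} B {}" unfolding mm_def by simp
    thus "{0} \<subseteq> {card M | M. mm E {} B M}" by force
  qed
  thus ?thesis unfolding mms_def by simp
qed

lemma mkM:
  assumes adjE: "\<forall>x. set (adj x) = {q \<in> set Q. E x q}"
    and inv: "inj_mt mt" "valid adj mt" "\<forall>q x. mt q = Some x \<longrightarrow> x \<in> A"
  shows "mm E A (set Q) {(x, q). mt q = Some x} \<and> card {(x, q). mt q = Some x} = cnt Q mt"
proof
  show "mm E A (set Q) {(x, q). mt q = Some x}"
    using adjE inv unfolding mm_def valid_def inj_mt_def by auto
  have e: "{(x, q). mt q = Some x} = (\<lambda>q. (the (mt q), q)) ` {q \<in> set Q. mt q \<noteq> None}"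
  proof
    show "{(x, q). mt q = Some x} \<subseteq> (\<lambda>q. (the (mt q), q)) ` {q \<in> set Q. mt q \<noteq> None}"
    proof
      fix z assume "z \<in> {(x, q). mt q = Some x}"
      then obtain x q where z: "z = (x, q)" "mt q = Some x" by auto
      have "q \<in> set Q" using inv(2) adjE z(2) unfolding valid_def by auto
      thus "z \<in> (\<lambda>q. (the (mt q), q)) ` {q \<in> set Q. mt q \<noteq> None}" using z by force
    qed
  qed auto
  have "inj_on (\<lambda>q. (the (mt q), q)) {q \<in> set Q. mt q \<noteq> None}" unfolding inj_on_def by auto
  thus "card {(x, q). mt q = Some x} = cnt Q mt" unfolding e cnt_def by (simp add: card_image)
qed

lemma fail_bound:
  assumes adjE: "\<forall>x. set (adj x) = {q \<in> set Q. E x q}" and finA: "finite A"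
    and inv: "inj_mt mt" "valid adj mt" "\<forall>q x. mt q = Some x \<longrightarrow> x \<in> A"
    and F3: "\<forall>q\<in>set (adj p). V q"
    and F4: "\<forall>q. V q \<longrightarrow> (\<exists>x. mt q = Some x \<and> (\<forall>q'\<in>set (adj x). V q'))"
    and M: "mm E (insert p A) (set Q) M"
  shows "card M \<le> mms E A (set Q)"
proof -
  define M1 where "M1 = {(x, q) \<in> M. \<not> V q}"
  define M2 where "M2 = {(x, q). V q \<and> mt q = Some x}"
  define Vs where "Vs = {q. V q}"
  have VsQ: "Vs \<subseteq> set Q" using F4 inv(2) adjE unfolding Vs_def valid_def by fastforce
  have finQ: "finite (set Q)" by simp
  have finVs: "finite Vs" using VsQ finite_subset by blast
  have edgeM: "\<And>x q. (x, q) \<in> M \<Longrightarrow> E x q \<and> q \<in> set Q \<and> x \<in> insert p A" using M unfolding mm_def by auto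
  have K: "\<And>x q. (x, q) \<in> M \<Longrightarrow> x = p \<or> (\<exists>q'. V q' \<and> mt q' = Some x) \<Longrightarrow> V q"
  proof -
    fix x q assume a: "(x, q) \<in> M" "x = p \<or> (\<exists>q'. V q' \<and> mt q' = Some x)"
    have qa: "q \<in> set (adj x)" using edgeM[OF a(1)] adjE by auto
    show "V q"
    proof (cases "x = p")
      case True thus ?thesis using F3 qa by auto
    next
      case False
      then obtain q' where "V q'" "mt q' = Some x" using a(2) by auto
      thus ?thesis using F4 qa by fastforce
    qed
  qed
  have injmt: "\<And>q1 q2 x. mt q1 = Some x \<Longrightarrow> mt q2 = Some x \<Longrightarrow> q1 = q2" using inv(1) unfolding inj_mt_def by blast
  have injM: "\<And>x q x' q'. (x, q) \<in> M \<Longrightarrow> (x', q') \<in> M \<Longrightarrow> (x = x' \<longleftrightarrow> q = q')" using M unfolding mm_def by blast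
  have mmM: "mm E A (set Q) (M1 \<union> M2)"
    unfolding mm_def
  proof (intro conjI)
    show "M1 \<union> M2 \<subseteq> A \<times> set Q"
    proof
      fix z assume z: "z \<in> M1 \<union> M2"
      then obtain x q where zz: "z = (x, q)" by (cases z) auto
      show "z \<in> A \<times> set Q"
      proof (cases "z \<in> M1")
        case True
        hence "(x, q) \<in> M" "\<not> V q" unfolding M1_def zz by auto
        thus ?thesis using edgeM K zz by blast
      next
        case False
        hence "V q" "mt q = Some x" using z unfolding M2_def zz by auto
        thus ?thesis using inv(3) VsQ zz unfolding Vs_def by auto
      qed
    qed
    show "\<forall>(p, q)\<in>M1 \<union> M2. E p q"
    proof (clarify)
      fix x q assume a: "(x, q) \<in> M1 \<union> M2"
      show "E x q"
      proof (cases "(x, q) \<in> M1")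
        case True thus ?thesis using edgeM unfolding M1_def by blast
      next
        case False
        hence "mt q = Some x" using a unfolding M2_def by blast
        hence "q \<in> set (adj x)" using inv(2) unfolding valid_def by blast
        thus ?thesis using adjE by blast
      qed
    qed
    show "\<forall>(p, q)\<in>M1 \<union> M2. \<forall>(p', q')\<in>M1 \<union> M2. (p = p') = (q = q')"
    proof (clarify)
      fix x q x' q' assume a: "(x, q) \<in> M1 \<union> M2" "(x', q') \<in> M1 \<union> M2"
      show "(x = x') = (q = q')"
      proof (cases "(x, q) \<in> M1")
        case T1: True
        show ?thesis
        proof (cases "(x', q') \<in> M1")
          case True thus ?thesis using T1 injM unfolding M1_def by auto
        next
          case False
          hence h: "V q'" "mt q' = Some x'" using a(2) unfolding M2_def by auto
          have "\<not> V q" "(x, q) \<in> M" using T1 unfolding M1_def by auto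
          thus ?thesis using K h by blast
        qed
      next
        case F1: False
        hence h: "V q" "mt q = Some x" using a(1) unfolding M2_def by auto
        show ?thesis
        proof (cases "(x', q') \<in> M1")
          case True
          have "\<not> V q'" "(x', q') \<in> M" using True unfolding M1_def by auto
          thus ?thesis using K h by blast
        next
          case False
          hence h': "V q'" "mt q' = Some x'" using a(2) unfolding M2_def by auto
          thus ?thesis using h injmt by auto
        qed
      qed
    qed
  qed
  have finM: "finite M" using M finA unfolding mm_def by (meson finite_SigmaI finite_insert finQ finite_subset)
  have M2e: "M2 = (\<lambda>q. (the (mt q), q)) ` Vs" unfolding M2_def Vs_def using F4 by force
  have cM2: "card M2 = card Vs" unfolding M2e by (rule card_image) (auto simp: inj_on_def)
  have finM2: "finite M2" unfolding M2e using finVs by simp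
  have finM1: "finite M1" unfolding M1_def by (rule finite_subset[OF _ finM]) auto
  have disj: "M1 \<inter> M2 = {}" unfolding M1_def M2_def by auto
  have c12: "card (M1 \<union> M2) = card M1 + card Vs" using card_Un_disjoint[OF finM1 finM2 disj] cM2 by simp
  define M3 where "M3 = {(x, q) \<in> M. V q}"
  have "M = M1 \<union> M3" "M1 \<inter> M3 = {}" unfolding M1_def M3_def by auto
  hence cM: "card M = card M1 + card M3" using finM by (metis card_Un_disjoint finite_Un)
  have "M3 \<subseteq> M" unfolding M3_def by blast
  hence "inj_on snd M3" using inj_on_subset[OF mm_inj_snd[OF M]] by blast
  hence "card M3 = card (snd ` M3)" by (simp add: card_image)
  also have "\<dots> \<le> card Vs" using finVs unfolding M3_def Vs_def by (intro card_mono) auto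
  finally have "card M \<le> card (M1 \<union> M2)" using cM c12 by simp
  also have "\<dots> \<le> mms E A (set Q)" using mms_ge[OF finA finQ mmM] .
  finally show ?thesis .
qed

lemma kuhn_step:
  assumes adjE: "\<forall>x. set (adj x) = {q \<in> set Q. E x q}" and finA: "finite A"
    and inv: "inj_mt mt" "valid adj mt" "\<forall>q x. mt q = Some x \<longrightarrow> x \<in> A"
    and c: "cnt Q mt = mms E A (set Q)" and pA: "p \<notin> A"
    and mt': "mt' = fst (snd (aug (Suc (length Q)) adj mt (\<lambda>_. False) p (adj p)))"
  shows "inj_mt mt' \<and> valid adj mt' \<and> (\<forall>q x. mt' q = Some x \<longrightarrow> x \<in> insert p A)
         \<and> cnt Q mt' = mms E (insert p A) (set Q)"
proof -
  have adjQ: "\<forall>x. set (adj x) \<subseteq> set Q" using adjE by auto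
  have finQ: "finite (set Q)" by simp
  have finA': "finite (insert p A)" using finA by simp
  have np: "\<forall>q. mt q = Some p \<longrightarrow> (\<lambda>_. False) q" using inv(3) pA by auto
  obtain b m vs' where R: "aug (Suc (length Q)) adj mt (\<lambda>_. False) p (adj p) = (b, m, vs')"
    by (cases "aug (Suc (length Q)) adj mt (\<lambda>_. False) p (adj p)") auto
  have mm': "mt' = m" using R mt' by simp
  show ?thesis
  proof (cases b)
    case True
    have R': "aug (Suc (length Q)) adj mt (\<lambda>_. False) p (adj p) = (True, m, vs')" using R True by simp
    have S: "(\<forall>q. (\<lambda>_. False) q \<longrightarrow> m q = mt q) \<and> valid adj m
     \<and> (\<forall>q1 q2 x. m q1 = Some x \<longrightarrow> m q2 = Some x \<longrightarrow> mt q1 \<noteq> Some p \<longrightarrow> mt q2 \<noteq> Some p \<longrightarrow> q1 = q2)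
     \<and> cnt Q m = Suc (cnt Q mt)
     \<and> (\<forall>q x. m q = Some x \<longrightarrow> mt q \<noteq> Some p \<longrightarrow> x = p \<or> (\<exists>q2. mt q2 = Some x \<and> x \<noteq> p))"
      using aug_succ[OF R' adjQ inv(1,2) subset_refl np] .
    have nP: "\<And>q. mt q \<noteq> Some p" using np by auto
    have i1: "inj_mt m" using S nP unfolding inj_mt_def by blast
    have i2: "valid adj m" using S by blast
    have i3: "\<forall>q x. m q = Some x \<longrightarrow> x \<in> insert p A"
    proof (intro allI impI)
      fix q x assume "m q = Some x"
      hence "x = p \<or> (\<exists>q2. mt q2 = Some x \<and> x \<noteq> p)" using S nP by blast
      thus "x \<in> insert p A" using inv(3) by blast
    qed
    have i4: "cnt Q m = Suc (cnt Q mt)" using S by blast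
    have ge: "cnt Q m \<le> mms E (insert p A) (set Q)"
      using mkM[OF adjE i1 i2 i3] mms_ge[OF finA' finQ] by metis
    obtain M where M: "mm E (insert p A) (set Q) M" "card M = mms E (insert p A) (set Q)"
      using mms_obtain[OF finA' finQ] by blast
    define M0 where "M0 = {z \<in> M. fst z \<noteq> p}"
    define Mp where "Mp = {z \<in> M. fst z = p}"
    have mm0: "mm E A (set Q) M0" using M(1) unfolding mm_def M0_def by fastforce
    have finM: "finite M" using M(1) finA' unfolding mm_def by (meson finite_SigmaI finQ finite_subset)
    have "M = M0 \<union> Mp" "M0 \<inter> Mp = {}" unfolding M0_def Mp_def by auto
    hence cM: "card M = card M0 + card Mp" using finM by (metis card_Un_disjoint finite_Un)
    have "Mp \<subseteq> M" unfolding Mp_def by blast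
    hence "inj_on fst Mp" using inj_on_subset[OF mm_inj_fst[OF M(1)]] by blast
    hence "card Mp = card (fst ` Mp)" by (simp add: card_image)
    also have "\<dots> \<le> card {p}" by (intro card_mono) (auto simp: Mp_def)
    finally have "card Mp \<le> 1" by simp
    hence "mms E (insert p A) (set Q) \<le> mms E A (set Q) + 1"
      using cM M(2) mms_ge[OF finA finQ mm0] by linarith
    hence "cnt Q m = mms E (insert p A) (set Q)" using ge i4 c by linarith
    thus ?thesis using i1 i2 i3 mm' by simp
  next
    case False
    have R': "aug (Suc (length Q)) adj mt (\<lambda>_. False) p (adj p) = (False, m, vs')" using R False by simp
    have meq: "m = mt" using aug_fail_basic[OF R'] by simp
    have fuel: "unv Q (\<lambda>_. False) < Suc (length Q)"
      unfolding unv_def using card_length[of Q] by simp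
    have F: "(\<forall>q\<in>set (adj p). vs' q) \<and> (\<forall>q. vs' q \<and> \<not> False \<longrightarrow> (\<exists>x. mt q = Some x \<and> (\<forall>q'\<in>set (adj x). vs' q')))"
      using aug_fail[OF R' adjQ _ fuel] adjQ by blast
    have le: "mms E (insert p A) (set Q) \<le> cnt Q mt"
    proof -
      obtain M where M: "mm E (insert p A) (set Q) M" "card M = mms E (insert p A) (set Q)"
        using mms_obtain[OF finA' finQ] by blast
      have "card M \<le> mms E A (set Q)"
        using fail_bound[OF adjE finA inv, of p vs' M] F M(1) by blast
      thus ?thesis using M(2) c by simp
    qed
    have i3: "\<forall>q x. mt q = Some x \<longrightarrow> x \<in> insert p A" using inv(3) by blast
    have ge: "cnt Q mt \<le> mms E (insert p A) (set Q)"
      using mkM[OF adjE inv(1,2) i3] mms_ge[OF finA' finQ] by metis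
    show ?thesis using le ge inv i3 mm' meq by simp
  qed
qed

lemma kuhn_correct:
  assumes adjE: "\<forall>x. set (adj x) = {q \<in> set Q. E x q}"
  shows "distinct ps \<Longrightarrow> set ps \<inter> A = {} \<Longrightarrow> finite A \<Longrightarrow> inj_mt mt \<Longrightarrow> valid adj mt
    \<Longrightarrow> (\<forall>q x. mt q = Some x \<longrightarrow> x \<in> A) \<Longrightarrow> cnt Q mt = mms E A (set Q)
    \<Longrightarrow> cnt Q (kuhn adj Q mt ps) = mms E (A \<union> set ps) (set Q)"
proof (induction ps arbitrary: A mt)
  case Nil thus ?case by simp
next
  case (Cons p ps)
  define mt' where "mt' = fst (snd (aug (Suc (length Q)) adj mt (\<lambda>_. False) p (adj p)))"
  have pA: "p \<notin> A" using Cons.prems(2) by auto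
  have st: "inj_mt mt' \<and> valid adj mt' \<and> (\<forall>q x. mt' q = Some x \<longrightarrow> x \<in> insert p A)
         \<and> cnt Q mt' = mms E (insert p A) (set Q)"
    using kuhn_step[OF adjE Cons.prems(3,4,5,6,7) pA mt'_def] .
  have "cnt Q (kuhn adj Q mt' ps) = mms E (insert p A \<union> set ps) (set Q)"
    using Cons.IH[of "insert p A" mt'] Cons.prems(1,2,3) st by auto
  thus ?case unfolding mt'_def by simp
qed

lemma matching_size_alg_correct:
  assumes "distinct P" "distinct Q"
  shows "matching_size_alg th n1 n2 P Q = mms (\<lambda>p q. th (n1 p) (n2 q)) (set P) (set Q)"
proof -
  define adj where "adj = adj_of th n1 n2 Q"
  define E where "E = (\<lambda>p q. th (n1 p) (n2 q))"
  have adjE: "\<forall>x. set (adj x) = {q \<in> set Q. E x q}" unfolding adj_def adj_of_def E_def by auto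
  have c0: "cnt Q (\<lambda>_. None :: 'x option) = mms E {} (set Q)" unfolding cnt_def mms_empty by simp
  have "cnt Q (kuhn adj Q (\<lambda>_. None) P) = mms E ({} \<union> set P) (set Q)"
    using kuhn_correct[OF adjE assms(1), of "{}" "\<lambda>_. None"] c0
    unfolding inj_mt_def valid_def by simp
  moreover have "length (filter (\<lambda>q. kuhn adj Q (\<lambda>_. None) P q \<noteq> None) Q) = cnt Q (kuhn adj Q (\<lambda>_. None) P)"
    unfolding cnt_def using distinct_card[OF distinct_filter[OF assms(2)]] by (simp add: set_filter)
  ultimately show ?thesis unfolding matching_size_alg_def Let_def adj_def E_def by simp
qed

lemma is_matching_mm: "is_matching th S1 S2 P Q M = mm (\<lambda>p q. th (xname S1 p) (xname S2 q)) P Q M"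
  unfolding is_matching_def mm_def by simp

lemma max_matching_mms: "max_matching_size th S1 S2 P Q = mms (\<lambda>p q. th (xname S1 p) (xname S2 q)) P Q"
  unfolding max_matching_size_def mms_def is_matching_mm ..

lemma self_in_nbhd: "x \<in> xcomps S \<Longrightarrow> x \<in> neighborhood S x v"
  unfolding neighborhood_def CC_def veryclose_def by (simp add: zero_enat_def)

lemma similar_correct:
  assumes "e1 \<in> xcomps S1" "e2 \<in> xcomps S2"
    and "distinct P1" "set P1 = neighborhood S1 e1 v"
    and "distinct P2" "set P2 = neighborhood S2 e2 v"
  shows "similar_alg th (xname S1) (xname S2) P1 P2 \<longleftrightarrow> similar_at th S1 S2 e1 e2 v"
proof -
  define k where "k = max_matching_size th S1 S2 (neighborhood S1 e1 v) (neighborhood S2 e2 v)"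
  have mk: "matching_size_alg th (xname S1) (xname S2) P1 P2 = k"
    unfolding k_def max_matching_mms using matching_size_alg_correct[OF assms(3,5)] assms(4,6) by simp
  have c1: "card (neighborhood S1 e1 v) = length P1" using assms(3,4) distinct_card by metis
  have c2: "card (neighborhood S2 e2 v) = length P2" using assms(5,6) distinct_card by metis
  have pos: "length P1 > 0" using self_in_nbhd[OF assms(1), of v] assms(4) by (cases P1) auto
  define d where "d = real (length P1) + real (length P2)"
  have "real (length P1) > 0" using pos by simp
  moreover have "real (length P2) \<ge> 0" by simp
  ultimately have dpos: "d > 0" unfolding d_def by linarith
  have "similar_at th S1 S2 e1 e2 v \<longleftrightarrow> 1/2 < 2 * real k / d"
    unfolding similar_at_def phi_BG_def Let_def k_def[symmetric] c1 c2 d_def by simp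
  also have "\<dots> \<longleftrightarrow> d < 4 * real k" using dpos by (simp add: field_simps)
  also have "\<dots> \<longleftrightarrow> length P1 + length P2 < 4 * k" unfolding d_def by linarith
  finally show ?thesis unfolding similar_alg_def mk by simp
qed

lemma syn_upto_correct:
  "(\<forall>w \<le> v. similar_alg th n1 n2 (nb1 e1 w) (nb2 e2 w) \<longleftrightarrow> sim w) \<Longrightarrow>
   syn_upto_alg th n1 n2 nb1 nb2 e1 e2 v \<longleftrightarrow> (\<forall>w \<le> v. sim w)"
proof (induction v)
  case 0 thus ?case by simp
next
  case (Suc v)
  have "syn_upto_alg th n1 n2 nb1 nb2 e1 e2 v \<longleftrightarrow> (\<forall>w \<le> v. sim w)" using Suc by simp
  thus ?case using Suc.prems by (auto simp: le_Suc_eq)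
qed

lemma syn_row_eq: "syn_row_alg th n1 n2 nb1 nb2 u e1 es = map (\<lambda>e2. ((e1, e2), syn_upto_alg th n1 n2 nb1 nb2 e1 e2 u)) es"
  by (induction es) auto

lemma all_syn_eq: "all_syn_alg th n1 n2 nb1 nb2 u cs1 cs2 =
  concat (map (\<lambda>e1. map (\<lambda>e2. ((e1, e2), syn_upto_alg th n1 n2 nb1 nb2 e1 e2 u)) cs2) cs1)"
  by (induction cs1) (auto simp: syn_row_eq)

lemma T_build_adj_eq: "T_build_adj P Q = length P * (length Q + 2) + 1"
  by (induction P) auto

lemma T_kuhn_bound:
  "(\<forall>p mt. T_aug (Suc (length Q)) adj mt (\<lambda>_. False) p (adj p) \<le> B) \<Longrightarrow>
   T_kuhn adj Q mt ps \<le> length ps * (1 + length Q + B) + 1"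
proof (induction ps arbitrary: mt)
  case Nil thus ?case by simp
next
  case (Cons p ps)
  have "T_aug (Suc (length Q)) adj mt (\<lambda>_. False) p (adj p) \<le> B" using Cons.prems by blast
  moreover have "T_kuhn adj Q (fst (snd (aug (Suc (length Q)) adj mt (\<lambda>_. False) p (adj p)))) ps \<le> length ps * (1 + length Q + B) + 1"
    using Cons.IH[OF Cons.prems] .
  ultimately show ?case by simp
qed

lemma T_similar_bound:
  assumes "length P \<le> q" "length Q \<le> q"
  shows "T_similar_alg th n1 n2 P Q \<le> 30 * (q+1)^3"
proof -
  define adj where "adj = adj_of th n1 n2 Q"
  have adjL: "\<forall>x. set (adj x) \<subseteq> set Q \<and> length (adj x) \<le> length Q"
    unfolding adj_def adj_of_def by auto
  have Ta: "\<forall>p mt. T_aug (Suc (length Q)) adj mt (\<lambda>_. False) p (adj p) \<le> (length Q + 2) * length Q + length Q + 1"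
  proof (intro allI)
    fix p mt
    have "T_aug (Suc (length Q)) adj mt (\<lambda>_. False) p (adj p) \<le> (length Q + 2) * unv Q (\<lambda>_. False) + length (adj p) + 1"
      using T_aug_bound[where n="Suc (length Q)" and mt=mt and vs="\<lambda>_. False" and p=p and qs="adj p" and adj=adj and Q=Q and L="length Q"] adjL
      by fastforce
    moreover have "unv Q (\<lambda>_. False) \<le> length Q" unfolding unv_def using card_length[of Q] by simp
    ultimately show "T_aug (Suc (length Q)) adj mt (\<lambda>_. False) p (adj p) \<le> (length Q + 2) * length Q + length Q + 1"
      using adjL mult_le_mono2[of "unv Q (\<lambda>_. False)" "length Q" "length Q + 2"] by (meson add_le_mono le_trans order_refl)
  qed
  have B: "(length Q + 2) * length Q + length Q + 1 \<le> (q + 2) * q + q + 1"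
    using assms(2) by (intro add_le_mono mult_le_mono) auto
  have Tk: "T_kuhn adj Q (\<lambda>_. None) P \<le> q * (1 + q + ((q + 2) * q + q + 1)) + 1"
  proof -
    have "T_kuhn adj Q (\<lambda>_. None) P \<le> length P * (1 + length Q + ((length Q + 2) * length Q + length Q + 1)) + 1"
      using T_kuhn_bound[OF Ta] .
    also have "\<dots> \<le> q * (1 + q + ((q + 2) * q + q + 1)) + 1"
      using assms B by (intro add_le_mono mult_le_mono) auto
    finally show ?thesis .
  qed
  have Tb: "T_build_adj P Q \<le> q * (q + 2) + 1"
    unfolding T_build_adj_eq using assms by (intro add_le_mono mult_le_mono) auto
  have "T_similar_alg th n1 n2 P Q = 3 + length P + length Q + (1 + T_build_adj P Q + (length Q + 1) + T_kuhn adj Q (\<lambda>_. None) P + (length Q + 1))"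
    unfolding T_similar_alg_def T_matching_size_alg_def Let_def adj_def ..
  also have "\<dots> \<le> 3 + q + q + (1 + (q * (q + 2) + 1) + (q + 1) + (q * (1 + q + ((q + 2) * q + q + 1)) + 1) + (q + 1))"
    using assms Tb Tk by linarith
  also have "\<dots> \<le> 30 * (q+1)^3" by (simp add: power3_eq_cube algebra_simps)
  finally show ?thesis .
qed

lemma T_upto_bound: "(\<forall>w\<le>v. T_similar_alg th n1 n2 (nb1 e1 w) (nb2 e2 w) \<le> B) \<Longrightarrow>
  T_syn_upto_alg th n1 n2 nb1 nb2 e1 e2 v \<le> Suc v * (B + 3)"
proof (induction v)
  case 0 thus ?case by simp
next
  case (Suc v)
  have "T_syn_upto_alg th n1 n2 nb1 nb2 e1 e2 v \<le> Suc v * (B + 3)" using Suc by simp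
  moreover have "T_similar_alg th n1 n2 (nb1 e1 (Suc v)) (nb2 e2 (Suc v)) \<le> B" using Suc.prems by simp
  ultimately show ?case by simp
qed

lemma T_row_bound: "(\<forall>e2\<in>set es. T_syn_upto_alg th n1 n2 nb1 nb2 e1 e2 u \<le> C) \<Longrightarrow>
  T_syn_row_alg th n1 n2 nb1 nb2 u e1 es \<le> length es * (C + 1) + 1"
  by (induction es) auto

lemma T_all_bound: "(\<forall>e1\<in>set cs1. T_syn_row_alg th n1 n2 nb1 nb2 u e1 cs2 \<le> R) \<Longrightarrow>
  T_all_syn_alg th n1 n2 nb1 nb2 u cs1 cs2 \<le> length cs1 * (R + length cs2 + 2) + 1"
  by (induction cs1) auto

lemma max_nbhd_fin:
  assumes "wf_schema S1" "wf_schema S2"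
  shows "finite (insert 0 ({card (neighborhood S1 x v) | x v. x \<in> xcomps S1 \<and> v \<le> u}
     \<union> {card (neighborhood S2 y v) | y v. y \<in> xcomps S2 \<and> v \<le> u}))"
proof -
  have f1: "finite (xcomps S1)" "finite (xcomps S2)" using assms unfolding wf_schema_def by auto
  have e1: "{card (neighborhood S1 x v) | x v. x \<in> xcomps S1 \<and> v \<le> u} = (\<lambda>(x, v). card (neighborhood S1 x v)) ` (xcomps S1 \<times> {..u})"
    by auto
  have e2: "{card (neighborhood S2 x v) | x v. x \<in> xcomps S2 \<and> v \<le> u} = (\<lambda>(x, v). card (neighborhood S2 x v)) ` (xcomps S2 \<times> {..u})"
    by auto
  show ?thesis unfolding e1 e2 using f1 by simp
qed

lemma nb_le1: "wf_schema S1 \<Longrightarrow> wf_schema S2 \<Longrightarrow> x \<in> xcomps S1 \<Longrightarrow> v \<le> u \<Longrightarrow>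
  card (neighborhood S1 x v) \<le> max_nbhd S1 S2 u"
  unfolding max_nbhd_def by (rule Max_ge[OF max_nbhd_fin]) auto

lemma nb_le2: "wf_schema S1 \<Longrightarrow> wf_schema S2 \<Longrightarrow> x \<in> xcomps S2 \<Longrightarrow> v \<le> u \<Longrightarrow>
  card (neighborhood S2 x v) \<le> max_nbhd S1 S2 u"
  unfolding max_nbhd_def by (rule Max_ge[OF max_nbhd_fin]) auto

lemma main_correct:
  assumes wf1: "wf_schema S1" and wf2: "wf_schema S2"
    and s1: "set cs1 = complex_elems S1" and s2: "set cs2 = complex_elems S2"
    and n1: "\<forall>x \<in> xcomps S1. \<forall>v \<le> u. distinct (nb1 x v) \<and> set (nb1 x v) = neighborhood S1 x v"
    and n2: "\<forall>y \<in> xcomps S2. \<forall>v \<le> u. distinct (nb2 y v) \<and> set (nb2 y v) = neighborhood S2 y v"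
  shows "all_syn_alg th (xname S1) (xname S2) nb1 nb2 u cs1 cs2
         = [((e1, e2), synonymous th S1 S2 e1 e2 u). e1 \<leftarrow> cs1, e2 \<leftarrow> cs2]"
proof -
  have key: "\<And>e1 e2. e1 \<in> set cs1 \<Longrightarrow> e2 \<in> set cs2 \<Longrightarrow>
     syn_upto_alg th (xname S1) (xname S2) nb1 nb2 e1 e2 u = synonymous th S1 S2 e1 e2 u"
  proof -
    fix e1 e2 assume a: "e1 \<in> set cs1" "e2 \<in> set cs2"
    have x1: "e1 \<in> xcomps S1" using a(1) s1 unfolding complex_elems_def by auto
    have x2: "e2 \<in> xcomps S2" using a(2) s2 unfolding complex_elems_def by auto
    have "\<forall>w\<le>u. similar_alg th (xname S1) (xname S2) (nb1 e1 w) (nb2 e2 w) \<longleftrightarrow> similar_at th S1 S2 e1 e2 w"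
      using similar_correct[OF x1 x2] n1 n2 x1 x2 by blast
    thus "syn_upto_alg th (xname S1) (xname S2) nb1 nb2 e1 e2 u = synonymous th S1 S2 e1 e2 u"
      unfolding synonymous_def by (rule syn_upto_correct)
  qed
  show ?thesis unfolding all_syn_eq using key by (auto intro!: arg_cong[where f=concat] map_cong)
qed

lemma main_time:
  assumes wf1: "wf_schema S1" and wf2: "wf_schema S2"
    and d1: "distinct cs1" and s1: "set cs1 = complex_elems S1"
    and d2: "distinct cs2" and s2: "set cs2 = complex_elems S2"
    and n1: "\<forall>x \<in> xcomps S1. \<forall>v \<le> u. distinct (nb1 x v) \<and> set (nb1 x v) = neighborhood S1 x v"
    and n2: "\<forall>y \<in> xcomps S2. \<forall>v \<le> u. distinct (nb2 y v) \<and> set (nb2 y v) = neighborhood S2 y v"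
  shows "T_all_syn_alg th (xname S1) (xname S2) nb1 nb2 u cs1 cs2
         \<le> 1000 * ((u + 1) * max_nbhd S1 S2 u ^ 3 * max_complex S1 S2 ^ 2) + 1000"
proof (cases cs1)
  case Nil thus ?thesis by simp
next
  case (Cons e0 rest)
  define q where "q = max_nbhd S1 S2 u"
  define m where "m = max_complex S1 S2"
  have cx1: "\<And>e. e \<in> set cs1 \<Longrightarrow> e \<in> xcomps S1" using s1 unfolding complex_elems_def by auto
  have cx2: "\<And>e. e \<in> set cs2 \<Longrightarrow> e \<in> xcomps S2" using s2 unfolding complex_elems_def by auto
  have L1: "\<And>x v. x \<in> xcomps S1 \<Longrightarrow> v \<le> u \<Longrightarrow> length (nb1 x v) \<le> q"
    using n1 nb_le1[OF wf1 wf2] distinct_card unfolding q_def by metis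
  have L2: "\<And>x v. x \<in> xcomps S2 \<Longrightarrow> v \<le> u \<Longrightarrow> length (nb2 x v) \<le> q"
    using n2 nb_le2[OF wf1 wf2] distinct_card unfolding q_def by metis
  have e0: "e0 \<in> xcomps S1" using cx1 Cons by simp
  have "e0 \<in> set (nb1 e0 0)" using n1 e0 self_in_nbhd[OF e0, of 0] by auto
  hence "length (nb1 e0 0) \<ge> 1" by (cases "nb1 e0 0") auto
  hence q1: "q \<ge> 1" using L1[OF e0, of 0] by simp
  have lc1: "length cs1 = card (complex_elems S1)" using distinct_card[OF d1] s1 by simp
  have lc2: "length cs2 = card (complex_elems S2)" using distinct_card[OF d2] s2 by simp
  have m1: "length cs1 \<le> m" "length cs2 \<le> m" unfolding m_def max_complex_def lc1 lc2 by auto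
  have mpos: "m \<ge> 1" using m1(1) Cons by simp
  define X where "X = (u + 1) * q ^ 3"
  have q3: "q ^ 3 \<ge> 1" using q1 by simp
  have X1: "X \<ge> 1" unfolding X_def using q3 by simp
  have cube: "(q + 1) ^ 3 \<le> 8 * q ^ 3"
  proof -
    have "(q + 1) ^ 3 \<le> (2 * q) ^ 3" using q1 by (intro power_mono) auto
    thus ?thesis by (simp add: power_mult_distrib)
  qed
  have Tsim: "\<And>e1 e2 v. e1 \<in> set cs1 \<Longrightarrow> e2 \<in> set cs2 \<Longrightarrow> v \<le> u \<Longrightarrow>
      T_similar_alg th (xname S1) (xname S2) (nb1 e1 v) (nb2 e2 v) \<le> 240 * q ^ 3"
  proof -
    fix e1 e2 v assume a: "e1 \<in> set cs1" "e2 \<in> set cs2" "v \<le> u"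
    have "T_similar_alg th (xname S1) (xname S2) (nb1 e1 v) (nb2 e2 v) \<le> 30 * (q + 1) ^ 3"
      using T_similar_bound L1[OF cx1[OF a(1)] a(3)] L2[OF cx2[OF a(2)] a(3)] by blast
    thus "T_similar_alg th (xname S1) (xname S2) (nb1 e1 v) (nb2 e2 v) \<le> 240 * q ^ 3" using cube by linarith
  qed
  have Tup: "\<And>e1 e2. e1 \<in> set cs1 \<Longrightarrow> e2 \<in> set cs2 \<Longrightarrow>
      T_syn_upto_alg th (xname S1) (xname S2) nb1 nb2 e1 e2 u \<le> 243 * X"
  proof -
    fix e1 e2 assume a: "e1 \<in> set cs1" "e2 \<in> set cs2"
    have "T_syn_upto_alg th (xname S1) (xname S2) nb1 nb2 e1 e2 u \<le> Suc u * (240 * q ^ 3 + 3)"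
      by (rule T_upto_bound) (use Tsim[OF a] in blast)
    also have "\<dots> \<le> Suc u * (243 * q ^ 3)" using q3 by (intro mult_le_mono) auto
    finally show "T_syn_upto_alg th (xname S1) (xname S2) nb1 nb2 e1 e2 u \<le> 243 * X"
      unfolding X_def by simp
  qed
  have Trow: "\<And>e1. e1 \<in> set cs1 \<Longrightarrow> T_syn_row_alg th (xname S1) (xname S2) nb1 nb2 u e1 cs2 \<le> m * (244 * X) + 1"
  proof -
    fix e1 assume a: "e1 \<in> set cs1"
    have "T_syn_row_alg th (xname S1) (xname S2) nb1 nb2 u e1 cs2 \<le> length cs2 * (243 * X + 1) + 1"
      by (rule T_row_bound) (use Tup[OF a] in blast)
    also have "\<dots> \<le> m * (244 * X) + 1" using m1 X1 by (intro add_le_mono mult_le_mono) auto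
    finally show "T_syn_row_alg th (xname S1) (xname S2) nb1 nb2 u e1 cs2 \<le> m * (244 * X) + 1" .
  qed
  have "T_all_syn_alg th (xname S1) (xname S2) nb1 nb2 u cs1 cs2 \<le> length cs1 * (m * (244 * X) + 1 + length cs2 + 2) + 1"
    by (rule T_all_bound) (use Trow in blast)
  also have "\<dots> \<le> m * (m * (244 * X) + 1 + m + 2) + 1" using m1 by (intro add_le_mono mult_le_mono) auto
  also have "\<dots> \<le> m * (m * (248 * X)) + 1"
  proof -
    have h1: "m \<le> m * X" using X1 by simp
    have e: "m * (244 * X) = 244 * (m * X)" "m * (248 * X) = 248 * (m * X)" by simp_all
    have "m * (244 * X) + 1 + m + 2 \<le> m * (248 * X)" using h1 mpos e by linarith
    thus ?thesis by (intro add_le_mono mult_le_mono) auto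
  qed
  also have "\<dots> = 248 * (X * m ^ 2) + 1" by (simp add: power2_eq_square)
  also have "\<dots> \<le> 1000 * (X * m ^ 2) + 1000" by simp
  also have "X * m ^ 2 = (u + 1) * max_nbhd S1 S2 u ^ 3 * max_complex S1 S2 ^ 2" unfolding X_def q_def m_def ..
  finally show ?thesis .
qed

theorem mainTheorem5:
  "\<exists>C :: nat. \<forall>(S1 :: ('x, 'n) schema) (S2 :: ('y, 'n) schema) (th :: 'n \<Rightarrow> 'n \<Rightarrow> bool)
       (u :: nat) (cs1 :: 'x list) (cs2 :: 'y list)
       (nb1 :: 'x \<Rightarrow> nat \<Rightarrow> 'x list) (nb2 :: 'y \<Rightarrow> nat \<Rightarrow> 'y list).
     wf_schema S1 \<and> wf_schema S2 \<and> (\<forall>a b. th a b \<longrightarrow> th b a)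
     \<and> distinct cs1 \<and> set cs1 = complex_elems S1
     \<and> distinct cs2 \<and> set cs2 = complex_elems S2
     \<and> (\<forall>x \<in> xcomps S1. \<forall>v \<le> u. distinct (nb1 x v) \<and> set (nb1 x v) = neighborhood S1 x v)
     \<and> (\<forall>y \<in> xcomps S2. \<forall>v \<le> u. distinct (nb2 y v) \<and> set (nb2 y v) = neighborhood S2 y v)
     \<longrightarrow>
       all_syn_alg th (xname S1) (xname S2) nb1 nb2 u cs1 cs2
         = [((e1, e2), synonymous th S1 S2 e1 e2 u). e1 \<leftarrow> cs1, e2 \<leftarrow> cs2]
     \<and> T_all_syn_alg th (xname S1) (xname S2) nb1 nb2 u cs1 cs2
         \<le> C * ((u + 1) * max_nbhd S1 S2 u ^ 3 * max_complex S1 S2 ^ 2) + C"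
  apply (rule exI[of _ 1000])
  apply (intro allI impI)
  apply (elim conjE)
  apply (intro conjI)
   apply (rule main_correct; assumption)
  apply (rule main_time; assumption)
  done

end
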